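(* Let $F_1:\mathbb{C}\to\mathbb{R}$, $F_1(z)=|z|^2(\ln|z|^2-1)$ for $z\ne0$ and $F_1(0)=0$. For all $z_1,z_2\in\mathbb{C}$, setting $\zeta:=z_1-z_2$, $$F_1(z_1)\le F_1(z_2)+2\Re(z_2\overline{\zeta})\ln|z_2|^2+2|\zeta|^2\Big(\ln\big(\max(|z_2|,|z_1|)\big)+1\Big),$$ where, when $z_2=0$, the second term on the right-hand side is understood as $0$, and when moreover $z_1=0$, the last term is also understood as $0$. *)

theory Defs
  imports Complex_Main
begin

definition F1 :: "complex \<Rightarrow> real" where
  "F1 z = (if z = 0 then 0 else (cmod z)^2 * (ln ((cmod z)^2) - 1))"

end

theory Submission
  imports Defs
begin


lemma ln_upper:
  fixes u :: real assumes "1 \<le> u" shows "ln u \<le> (u - 1/u)/2"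
proof -
  let ?h = "\<lambda>x::real. (x - 1/x)/2 - ln x"
  have "?h 1 \<le> ?h u"
  proof (rule DERIV_nonneg_imp_increasing_open[OF assms])
    fix x :: real assume x: "1 < x" "x < u"
    have "DERIV ?h x :> ((1 + 1/x^2)/2 - 1/x)"
      using x by (auto intro!: derivative_eq_intros simp: power2_eq_square field_simps)
    moreover have "(1 + 1/x^2)/2 - 1/x = (x-1)^2/(2*x^2)"
      using x by (simp add: field_simps power2_eq_square)
    ultimately show "\<exists>y. DERIV ?h x :> y \<and> 0 \<le> y" by auto
  next
    show "continuous_on {1..u} ?h"
      by (intro continuous_intros) auto
  qed
  then show ?thesis by simp
qed

lemma ln_lower:
  fixes u :: real assumes "1 \<le> u" shows "2*(u-1)/(u+1) \<le> ln u"
proof -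
  let ?h = "\<lambda>x::real. ln x - 2*(x-1)/(x+1)"
  have "?h 1 \<le> ?h u"
  proof (rule DERIV_nonneg_imp_increasing_open[OF assms])
    fix x :: real assume x: "1 < x" "x < u"
    have "DERIV ?h x :> (1/x - (2*(x+1) - 2*(x-1))/(x+1)^2)"
      using x by (auto intro!: derivative_eq_intros simp: power2_eq_square field_simps)
    moreover have "1/x - (2*(x+1) - 2*(x-1))/(x+1)^2 = (x-1)^2/(x*(x+1)^2)"
    proof -
      have "x + 1 > 0" "x > 0" using x by auto
      then show ?thesis by (simp add: divide_simps) (simp add: algebra_simps power2_eq_square)
    qed
    ultimately show "\<exists>y. DERIV ?h x :> y \<and> 0 \<le> y" using x by auto
  next
    show "continuous_on {1..u} ?h"
      by (intro continuous_intros) auto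
  qed
  then show ?thesis by simp
qed

lemma real_ineq:
  fixes s t :: real assumes s: "s > 0" and t: "t > 0"
  shows "s^2*(2*ln s - 1) \<le> t^2*(2*ln t - 1) + 2*(s*t - t^2)*(2*ln t)
           + 2*(s^2 + t^2 - 2*s*t)*(ln (max t s) + 1)"
proof (cases "t \<le> s")
  case True
  define D where "D = ln s - ln t"
  have D: "D \<le> (s/t - t/s)/2"
    using ln_upper[of "s/t"] True s t by (simp add: D_def ln_divide_pos)
  have "2*t*(2*s-t)*D \<le> 2*t*(2*s-t)*((s/t - t/s)/2)"
    using D True t by (intro mult_left_mono) auto
  also have "\<dots> = (2*s-t)*(s^2-t^2)/s"
    using s t by (simp add: field_simps power2_eq_square)
  finally have 1: "2*t*(2*s-t)*D \<le> (2*s-t)*(s^2-t^2)/s" .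
  have 2: "(s-t)*(3*s-t) - (2*s-t)*(s^2-t^2)/s = (s-t)^3/s"
    using s by (simp add: field_simps power2_eq_square power3_eq_cube)
  have 3: "(s-t)^3/s \<ge> 0" using True s by simp
  have mx: "max t s = s" using True by simp
  have "t^2*(2*ln t - 1) + 2*(s*t - t^2)*(2*ln t) + 2*(s^2 + t^2 - 2*s*t)*(ln (max t s) + 1)
        - s^2*(2*ln s - 1) = (s-t)*(3*s-t) - 2*t*(2*s-t)*D"
    unfolding mx D_def by (simp add: algebra_simps power2_eq_square)
  then show ?thesis using 1 2 3 by linarith
next
  case False
  define D where "D = ln t - ln s"
  have D: "2*(t/s-1)/(t/s+1) \<le> D"
    using ln_lower[of "t/s"] False s t by (simp add: D_def ln_divide_pos)
  have e: "2*(t/s-1)/(t/s+1) = 2*(t-s)/(t+s)"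
    using s t by (simp add: divide_simps)
  have "2*s^2*(2*(t-s)/(t+s)) \<le> 2*s^2*D"
    using D e by (intro mult_left_mono) auto
  moreover have "(t-s)*(t-3*s) + 2*s^2*(2*(t-s)/(t+s)) = (t-s)^3/(t+s)"
    using s t by (simp add: field_simps power2_eq_square power3_eq_cube)
  moreover have "(t-s)^3/(t+s) \<ge> 0" using False s t by simp
  moreover have mx: "max t s = t" using False by simp
  moreover have "t^2*(2*ln t - 1) + 2*(s*t - t^2)*(2*ln t) + 2*(s^2 + t^2 - 2*s*t)*(ln (max t s) + 1)
        - s^2*(2*ln s - 1) = (t-s)*(t-3*s) + 2*s^2*D"
    unfolding mx D_def by (simp add: algebra_simps power2_eq_square)
  ultimately show ?thesis by linarith
qed


lemma Re_le_prod: "Re (z2 * cnj z1) \<le> cmod z1 * cmod z2"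
proof -
  have "Re (z2 * cnj z1) \<le> cmod (z2 * cnj z1)" by (rule complex_Re_le_cmod)
  also have "\<dots> = cmod z1 * cmod z2" by (simp add: norm_mult)
  finally show ?thesis .
qed

theorem mainTheorem8:
  fixes z1 z2 :: complex
  defines "\<zeta> \<equiv> z1 - z2"
  shows "F1 z1 \<le> F1 z2
           + (if z2 = 0 then 0 else 2 * Re (z2 * cnj \<zeta>) * ln ((cmod z2)^2))
           + (if z2 = 0 \<and> z1 = 0 then 0
              else 2 * (cmod \<zeta>)^2 * (ln (max (cmod z2) (cmod z1)) + 1))"
proof (cases "z2 = 0")
  case True
  show ?thesis
  proof (cases "z1 = 0")
    case True
    then show ?thesis using \<open>z2 = 0\<close> by (simp add: F1_def)
  next
    case False
    have "ln ((cmod z1)^2) = 2 * ln (cmod z1)" using False by (simp add: ln_realpow)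
    then show ?thesis using False True
      by (simp add: F1_def \<zeta>_def algebra_simps)
  qed
next
  case z2: False
  define t where "t = cmod z2"
  have t: "t > 0" using z2 by (simp add: t_def)
  have lt: "ln ((cmod z2)^2) = 2 * ln t" using t by (simp add: ln_realpow t_def)
  show ?thesis
  proof (cases "z1 = 0")
    case True
    have "Re (z2 * cnj \<zeta>) = -(t^2)"
    proof -
      have "z2 * cnj \<zeta> = - (z2 * cnj z2)" using True by (simp add: \<zeta>_def)
      also have "z2 * cnj z2 = complex_of_real (t^2)" by (simp add: t_def complex_norm_square[symmetric])
      finally show ?thesis by simp
    qed
    moreover have "cmod \<zeta> = t" using True by (simp add: \<zeta>_def t_def)
    ultimately show ?thesis using True z2 t lt
      by (simp add: F1_def t_def[symmetric] algebra_simps power2_eq_square)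
  next
    case z1: False
    define s where "s = cmod z1"
    have s: "s > 0" using z1 by (simp add: s_def)
    have ls: "ln ((cmod z1)^2) = 2 * ln s" using s by (simp add: ln_realpow s_def)
    define c where "c = Re (z2 * cnj z1)"
    have c: "c \<le> s * t" using Re_le_prod[of z2 z1] by (simp add: c_def s_def t_def)
    have t2: "t^2 = (Re z2)^2 + (Im z2)^2" by (simp add: t_def cmod_power2)
    have s2: "s^2 = (Re z1)^2 + (Im z1)^2" by (simp add: s_def cmod_power2)
    have r: "Re (z2 * cnj \<zeta>) = c - t^2"
      unfolding t2 by (simp add: \<zeta>_def c_def algebra_simps power2_eq_square)
    have n: "(cmod \<zeta>)^2 = s^2 + t^2 - 2*c"
      unfolding t2 s2 \<zeta>_def cmod_power2 by (simp add: c_def power2_eq_square algebra_simps)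
    define L where "L = ln (max t s)"
    have Lt: "ln t \<le> L" unfolding L_def using t s by simp
    have key: "s^2*(2*ln s - 1) \<le> t^2*(2*ln t - 1) + 2*(s*t - t^2)*(2*ln t)
           + 2*(s^2 + t^2 - 2*s*t)*(L + 1)"
      using real_ineq[OF s t] by (simp add: L_def)
    have diff: "(2*(c - t^2)*(2*ln t) + 2*(s^2 + t^2 - 2*c)*(L + 1))
        - (2*(s*t - t^2)*(2*ln t) + 2*(s^2 + t^2 - 2*s*t)*(L + 1))
        = (s*t - c) * (4*(L+1) - 4*ln t)"
      by (simp add: algebra_simps)
    have "(s*t - c) * (4*(L+1) - 4*ln t) \<ge> 0" using c Lt by simp
    have f1: "F1 z1 = s^2*(2*ln s - 1)" using z1 ls by (simp add: F1_def s_def)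
    have f2: "F1 z2 = t^2*(2*ln t - 1)" using z2 lt by (simp add: F1_def t_def)
    have i1: "(if z2 = 0 then 0 else 2 * Re (z2 * cnj \<zeta>) * ln ((cmod z2)^2)) = 2*(c - t^2)*(2*ln t)"
      using z2 r lt by simp
    have i2: "(if z2 = 0 \<and> z1 = 0 then 0
              else 2 * (cmod \<zeta>)^2 * (ln (max (cmod z2) (cmod z1)) + 1)) = 2*(s^2 + t^2 - 2*c)*(L + 1)"
      using z2 n by (simp add: L_def s_def t_def)
    show ?thesis unfolding f1 f2 i1 i2 using key diff \<open>(s*t - c) * (4*(L+1) - 4*ln t) \<ge> 0\<close> by linarith
  qed
qed

end
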